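(* The greedy algorithm, applied to the declared types, is a truthful mechanism without money and with verification for CAs with unknown $k$-minded bidders (single supply).
   Context: Combinatorial auction with a set $\mathsf U$ of $m$ goods, each in a single copy, and $n$ bidders. True type of bidder $i$: $t_i=(v_i,\mathcal S_i)$ with $\mathcal S_i$ a private collection of $k$ nonempty subsets of $\mathsf U$ and $v_i:\mathcal S_i\to\mathbb R_{\ge0}$ private, extended by $v_i(T)=\max\{v_i(S'):S'\in\mathcal S_i,S'\subseteq T\}$ ($0$ if none). Declarations $(w,\mathcal W)$ have the same form. Greedy algorithm on declarations $(w_i,\mathcal W_i)$: list all elementary bids $(i,S,w_i(S))$ with $S\in\mathcal W_i$, $w_i(S)>0$ in non-increasing order of value, ties broken in favour of smaller bidder index; scan the list and accept $(i,S,w_i(S))$ (allocate $S$ to $i$) iff $i$ has not yet been allocated a set and $S$ is disjoint from all previously accepted sets. Verification: bidder $i$ with true type $t_i$ facing $\mathbf b_{-i}$ may declare $b_i=(z,\mathcal T)$ only if $z(A_i(b_i,\mathbf b_{-i}))\le v_i(A_i(b_i,\mathbf b_{-i}))$. Truthful without money and with verification: for all $i$, $\mathbf b_{-i}$, true types $t_i$ and declarations $b_i$ permitted by verification, $v_i(A_i(t_i,\mathbf b_{-i}))\ge v_i(A_i(b_i,\mathbf b_{-i}))$. *)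

theory Defs
  imports Complex_Main "HOL-Library.Product_Lexorder"
begin

text \<open>A type / declaration of a bidder is a pair (valuation, collection of sets).
  Bidders are indexed by 0..<n; a profile is a function from bidder indices to declarations.\<close>

type_synonym 'g decl = "('g set \<Rightarrow> real) \<times> 'g set set"

definition valid_decl :: "'g set \<Rightarrow> nat \<Rightarrow> 'g decl \<Rightarrow> bool" where
  "valid_decl U k d \<longleftrightarrow>
     snd d \<subseteq> Pow U \<and> card (snd d) = k \<and> {} \<notin> snd d \<and> (\<forall>S\<in>snd d. fst d S \<ge> 0)"

definition ext_val :: "'g decl \<Rightarrow> 'g set \<Rightarrow> real" where
  "ext_val d T = (if \<exists>S'\<in>snd d. S' \<subseteq> T
                  then Max {fst d S' | S'. S' \<in> snd d \<and> S' \<subseteq> T} else 0)"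

definition bids :: "nat \<Rightarrow> (nat \<Rightarrow> 'g decl) \<Rightarrow> (nat \<times> 'g set) set" where
  "bids n b = {(i, S). i < n \<and> S \<in> snd (b i) \<and> fst (b i) S > 0}"

text \<open>Sorting key: non-increasing value, then smaller bidder index; ties among the
  same bidder's own sets (left unspecified by the paper) are broken by an arbitrary
  injective rank rk on bundles.\<close>
definition bid_key :: "('g set \<Rightarrow> nat) \<Rightarrow> (nat \<Rightarrow> 'g decl) \<Rightarrow> nat \<times> 'g set \<Rightarrow> real \<times> nat \<times> nat" where
  "bid_key rk b p = (- fst (b (fst p)) (snd p), fst p, rk (snd p))"

definition sorted_bids :: "('g set \<Rightarrow> nat) \<Rightarrow> nat \<Rightarrow> (nat \<Rightarrow> 'g decl) \<Rightarrow> (nat \<times> 'g set) list" where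
  "sorted_bids rk n b =
     map (the_inv_into (bids n b) (bid_key rk b))
         (sorted_list_of_set (bid_key rk b ` bids n b))"

fun greedy_scan :: "(nat \<times> 'g set) list \<Rightarrow> (nat \<Rightarrow> 'g set option) \<Rightarrow> (nat \<Rightarrow> 'g set option)" where
  "greedy_scan [] a = a"
| "greedy_scan ((i, S) # bs) a =
     greedy_scan bs (if a i = None \<and> (\<forall>j T. a j = Some T \<longrightarrow> S \<inter> T = {})
                     then a(i := Some S) else a)"

definition greedy_alloc :: "('g set \<Rightarrow> nat) \<Rightarrow> nat \<Rightarrow> (nat \<Rightarrow> 'g decl) \<Rightarrow> nat \<Rightarrow> 'g set" where
  "greedy_alloc rk n b i =
     (case greedy_scan (sorted_bids rk n b) (\<lambda>_. None) i of None \<Rightarrow> {} | Some S \<Rightarrow> S)"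

end

theory Submission imports Defs begin

lemma gs_app: "greedy_scan (xs @ ys) a = greedy_scan ys (greedy_scan xs a)"
  by (induction xs arbitrary: a) auto

lemma gs_mono: "a j = Some T \<Longrightarrow> greedy_scan xs a j = Some T"
proof (induction xs a rule: greedy_scan.induct)
  case (1 a) then show ?case by simp
next
  case (2 i S bs a)
  have "(if a i = None \<and> (\<forall>j T. a j = Some T \<longrightarrow> S \<inter> T = {}) then a(i := Some S) else a) j = Some T"
    using 2(2) by auto
  then show ?case using 2(1) by simp
qed

lemma gs_src: "greedy_scan xs a j = Some T \<Longrightarrow> a j = Some T \<or> (j,T) \<in> set xs"
proof (induction xs arbitrary: a)
  case Nil then show ?case by simp
next
  case (Cons p xs)
  obtain i S where p: "p = (i,S)" by (cases p)
  show ?case using Cons.IH[OF Cons.prems[unfolded p greedy_scan.simps]] p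
    by (auto split: if_splits)
qed

lemma gs_accept:
  "greedy_scan xs a j = Some T \<Longrightarrow> a j = None \<Longrightarrow>
   \<exists>pre post. xs = pre @ (j,T) # post \<and> greedy_scan pre a j = None \<and>
     (\<forall>j' T'. greedy_scan pre a j' = Some T' \<longrightarrow> T \<inter> T' = {})"
proof (induction xs arbitrary: a)
  case Nil then show ?case by simp
next
  case (Cons p xs)
  obtain i S where p: "p = (i,S)" by (cases p)
  define a' where "a' = (if a i = None \<and> (\<forall>j T. a j = Some T \<longrightarrow> S \<inter> T = {})
                     then a(i := Some S) else a)"
  have g: "greedy_scan xs a' j = Some T" using Cons.prems(1) p a'_def by simp
  show ?case
  proof (cases "a' j = None")
    case True
    from Cons.IH[OF g True] obtain pre post where
      "xs = pre @ (j,T) # post" "greedy_scan pre a' j = None"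
      "\<forall>j' T'. greedy_scan pre a' j' = Some T' \<longrightarrow> T \<inter> T' = {}" by blast
    then show ?thesis using p a'_def
      by (intro exI[of _ "p # pre"] exI[of _ post]) auto
  next
    case False
    then have "i = j" "a' j = Some S" "a i = None" "\<forall>j T. a j = Some T \<longrightarrow> S \<inter> T = {}"
      using Cons.prems(2) a'_def by (auto split: if_splits)
    moreover have "S = T" using gs_mono[of a' j S xs] g \<open>a' j = Some S\<close> by simp
    ultimately show ?thesis using p Cons.prems(2)
      by (intro exI[of _ "[]"] exI[of _ xs]) auto
  qed
qed

lemma gs_filter:
  "greedy_scan xs a i = None \<Longrightarrow> greedy_scan xs a = greedy_scan (filter (\<lambda>q. fst q \<noteq> i) xs) a"
proof (induction xs arbitrary: a)
  case Nil then show ?case by simp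
next
  case (Cons p xs)
  obtain j S where p: "p = (j,S)" by (cases p)
  show ?case
  proof (cases "j = i")
    case True
    have "\<not> (a i = None \<and> (\<forall>j T. a j = Some T \<longrightarrow> S \<inter> T = {}))"
    proof
      assume h: "a i = None \<and> (\<forall>j T. a j = Some T \<longrightarrow> S \<inter> T = {})"
      then have "greedy_scan xs (a(i := Some S)) i = Some S" by (intro gs_mono) simp
      then show False using Cons.prems p True h by simp
    qed
    then have st: "greedy_scan (p # xs) a = greedy_scan xs a" using p True by (simp only: greedy_scan.simps if_False)
    then have "greedy_scan xs a i = None" using Cons.prems by simp
    from Cons.IH[OF this] show ?thesis using st p True by simp
  next
    case False
    define a' where "a' = (if a j = None \<and> (\<forall>j T. a j = Some T \<longrightarrow> S \<inter> T = {}) then a(j := Some S) else a)"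
    have "greedy_scan xs a' i = None" using Cons.prems p a'_def by simp
    from Cons.IH[OF this] show ?thesis using p False a'_def by simp
  qed
qed

lemma sorted_unique:
  "sorted_wrt (\<lambda>p q. (K::_\<Rightarrow>'k::linorder) p < K q) xs \<Longrightarrow> sorted_wrt (\<lambda>p q. K p < K q) ys
   \<Longrightarrow> set xs = set ys \<Longrightarrow> xs = ys"
proof (induction xs arbitrary: ys)
  case Nil then show ?case by simp
next
  case (Cons x xs)
  then obtain y ys' where ys: "ys = y # ys'" by (cases ys) auto
  have "x = y"
  proof (rule ccontr)
    assume "x \<noteq> y"
    then have "x \<in> set ys'" "y \<in> set xs" using Cons.prems ys by auto
    then show False using Cons.prems(1,2) ys by fastforce
  qed
  moreover have "x \<notin> set xs" "y \<notin> set ys'" using Cons.prems ys by auto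
  ultimately have "set xs = set ys'" using Cons.prems(3) ys by auto
  then show ?case using Cons ys \<open>x = y\<close> by auto
qed

lemma filter_takeWhile:
  "sorted_wrt (\<lambda>p q. (K::_\<Rightarrow>'k::linorder) p < K q) xs \<Longrightarrow>
   filter (\<lambda>q. K q < c) xs = takeWhile (\<lambda>q. K q < c) xs"
proof (induction xs)
  case Nil then show ?case by simp
next
  case (Cons x xs)
  show ?case
  proof (cases "K x < c")
    case True then show ?thesis using Cons by simp
  next
    case False
    then have "\<forall>y\<in>set xs. \<not> K y < c" using Cons.prems by fastforce
    then show ?thesis using False by (simp add: filter_empty_conv)
  qed
qed

lemma bids_sub: "\<forall>j<n. snd (b j) \<subseteq> Pow U \<Longrightarrow> bids n b \<subseteq> {0..<n} \<times> Pow U"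
  unfolding bids_def by auto

lemma sorted_bids_props:
  assumes "finite U" "inj_on rk (Pow U)" "\<forall>j<n. snd (b j) \<subseteq> Pow U"
  shows "set (sorted_bids rk n b) = bids n b"
    "sorted_wrt (\<lambda>p q. bid_key rk b p < bid_key rk b q) (sorted_bids rk n b)"
proof -
  have fin: "finite (bids n b)" using bids_sub[OF assms(3)] assms(1)
    by (meson finite_SigmaI finite_Pow_iff finite_atLeastLessThan finite_subset)
  have inj: "inj_on (bid_key rk b) (bids n b)"
  proof (rule inj_onI)
    fix p q assume "p \<in> bids n b" "q \<in> bids n b" "bid_key rk b p = bid_key rk b q"
    moreover obtain j P where "p = (j,P)" by (cases p)
    moreover obtain j' Q where "q = (j',Q)" by (cases q)
    ultimately have "j = j'" "rk P = rk Q" "P \<in> Pow U" "Q \<in> Pow U"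
      using bids_sub[OF assms(3)] by (auto simp: bid_key_def)
    then show "p = q" using \<open>p = (j,P)\<close> \<open>q = (j',Q)\<close> assms(2) by (auto dest: inj_onD)
  qed
  have m: "map (bid_key rk b) (sorted_bids rk n b) = sorted_list_of_set (bid_key rk b ` bids n b)"
    unfolding sorted_bids_def map_map
    by (rule map_idI) (use fin inj in \<open>auto intro: f_the_inv_into_f\<close>)
  show "set (sorted_bids rk n b) = bids n b"
    unfolding sorted_bids_def using fin inj
    by (auto simp: the_inv_into_f_f the_inv_into_into image_iff intro!: the_inv_into_into)
  have "sorted_wrt (<) (map (bid_key rk b) (sorted_bids rk n b))"
    unfolding m using fin by simp
  then show "sorted_wrt (\<lambda>p q. bid_key rk b p < bid_key rk b q) (sorted_bids rk n b)"
    by (simp add: sorted_wrt_map)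
qed

lemma ext_ge: "finite (snd d) \<Longrightarrow> T' \<in> snd d \<Longrightarrow> T' \<subseteq> T \<Longrightarrow> ext_val d T \<ge> fst d T'"
proof -
  assume f: "finite (snd d)" and m: "T' \<in> snd d" and s: "T' \<subseteq> T"
  have fin: "finite {fst d S' | S'. S' \<in> snd d \<and> S' \<subseteq> T}" using f by simp
  have e: "ext_val d T = Max {fst d S' | S'. S' \<in> snd d \<and> S' \<subseteq> T}"
    using m s by (auto simp: ext_val_def)
  have "fst d T' \<in> {fst d S' | S'. S' \<in> snd d \<and> S' \<subseteq> T}" using m s by blast
  from Max_ge[OF fin this] show ?thesis using e by simp
qed

lemma ext_nonneg: "finite (snd d) \<Longrightarrow> \<forall>S\<in>snd d. fst d S \<ge> 0 \<Longrightarrow> ext_val d T \<ge> 0"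
proof -
  assume f: "finite (snd d)" and nn: "\<forall>S\<in>snd d. fst d S \<ge> 0"
  show ?thesis
  proof (cases "\<exists>S'\<in>snd d. S' \<subseteq> T")
    case True
    then obtain S' where "S' \<in> snd d" "S' \<subseteq> T" by blast
    then have "ext_val d T \<ge> fst d S'" using ext_ge[OF f] by blast
    moreover have "fst d S' \<ge> 0" using nn \<open>S' \<in> snd d\<close> by blast
    ultimately show ?thesis by linarith
  next
    case False then show ?thesis by (simp add: ext_val_def)
  qed
qed

lemma ext_attain: "finite (snd d) \<Longrightarrow> ext_val d T \<noteq> 0 \<Longrightarrow>
   \<exists>S'\<in>snd d. S' \<subseteq> T \<and> ext_val d T = fst d S'"
proof -
  assume f: "finite (snd d)" and ne: "ext_val d T \<noteq> 0"
  then have ex: "\<exists>S'\<in>snd d. S' \<subseteq> T" by (auto simp: ext_val_def split: if_splits)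
  have fin: "finite {fst d S' | S'. S' \<in> snd d \<and> S' \<subseteq> T}" using f by simp
  have "{fst d S' | S'. S' \<in> snd d \<and> S' \<subseteq> T} \<noteq> {}" using ex by blast
  from Max_in[OF fin this] obtain S' where "S' \<in> snd d" "S' \<subseteq> T"
    "Max {fst d S' | S'. S' \<in> snd d \<and> S' \<subseteq> T} = fst d S'" by blast
  moreover have "ext_val d T = Max {fst d S' | S'. S' \<in> snd d \<and> S' \<subseteq> T}"
    using ex by (simp add: ext_val_def)
  ultimately show ?thesis by metis
qed

lemma pre_filter:
  assumes "sorted_wrt (\<lambda>p q. (K::_\<Rightarrow>'k::linorder) p < K q) (pre @ x # post)"
  shows "pre = filter (\<lambda>q. K q < K x) (pre @ x # post)"
proof -
  have "\<forall>q\<in>set pre. K q < K x" "\<forall>q\<in>set post. K x < K q"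
    using assms by (auto simp: sorted_wrt_append)
  then have "filter (\<lambda>q. K q < K x) pre = pre" "filter (\<lambda>q. K q < K x) (x # post) = []"
    by (auto simp: filter_empty_conv)
  then show ?thesis by simp
qed

lemma key_less: "j \<noteq> i \<Longrightarrow> ((v::real, j::nat, r::nat) < (a, i, s)) \<longleftrightarrow> (v < a \<or> v = a \<and> j < i)"
  by (auto simp: less_prod_def)

theorem theorem8:
  fixes U :: "'g set" and n k :: nat and rk :: "'g set \<Rightarrow> nat"
    and b :: "nat \<Rightarrow> 'g decl" and t bi :: "'g decl" and i :: nat
  assumes "finite U"
    and "inj_on rk (Pow U)"
    and "i < n"
    and "\<forall>j<n. valid_decl U k (b j)"
    and "valid_decl U k t"
    and "valid_decl U k bi"
    and "ext_val bi (greedy_alloc rk n (b(i := bi)) i)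
           \<le> ext_val t (greedy_alloc rk n (b(i := bi)) i)"
  shows "ext_val t (greedy_alloc rk n (b(i := t)) i)
           \<ge> ext_val t (greedy_alloc rk n (b(i := bi)) i)"
proof -
  define b1 where "b1 = b(i := bi)"
  define b2 where "b2 = b(i := t)"
  define K1 where "K1 = bid_key rk b1"
  define K2 where "K2 = bid_key rk b2"
  define L1 where "L1 = sorted_bids rk n b1"
  define L2 where "L2 = sorted_bids rk n b2"
  define e :: "nat \<Rightarrow> 'g set option" where "e = (\<lambda>_. None)"
  have finT: "finite (snd t)" and finB: "finite (snd bi)"
    using assms(1,5,6) by (auto simp: valid_decl_def intro: finite_subset)
  have tnn: "\<forall>S\<in>snd t. fst t S \<ge> 0" using assms(5) by (simp add: valid_decl_def)
  have t0: "{} \<notin> snd t" using assms(5) by (simp add: valid_decl_def)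
  have v1: "\<forall>j<n. snd (b1 j) \<subseteq> Pow U" using assms(4,6) by (auto simp: b1_def valid_decl_def)
  have v2: "\<forall>j<n. snd (b2 j) \<subseteq> Pow U" using assms(4,5) by (auto simp: b2_def valid_decl_def)
  note P1 = sorted_bids_props[OF assms(1,2) v1, folded L1_def K1_def]
  note P2 = sorted_bids_props[OF assms(1,2) v2, folded L2_def K2_def]
  have A1: "greedy_alloc rk n b1 i = (case greedy_scan L1 e i of None \<Rightarrow> {} | Some S \<Rightarrow> S)"
    by (simp add: greedy_alloc_def L1_def e_def)
  have A2: "greedy_alloc rk n b2 i = (case greedy_scan L2 e i of None \<Rightarrow> {} | Some S \<Rightarrow> S)"
    by (simp add: greedy_alloc_def L2_def e_def)
  show ?thesis
  proof (cases "greedy_scan L1 e i")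
    case None
    then have "greedy_alloc rk n b1 i = {}" using A1 by simp
    moreover have "ext_val t {} = 0" using t0 by (auto simp: ext_val_def)
    ultimately show ?thesis using ext_nonneg[OF finT tnn] by (simp add: b1_def b2_def)
  next
    case (Some S)
    have al1: "greedy_alloc rk n b1 i = S" using A1 Some by simp
    have "(i,S) \<in> bids n b1" using gs_src[OF Some] P1(1) by (simp add: e_def)
    then have Sin: "S \<in> snd bi" and Spos: "fst bi S > 0" by (auto simp: bids_def b1_def)
    have "ext_val t S \<ge> fst bi S"
      using assms(7) ext_ge[OF finB Sin, of S] al1 by (simp add: b1_def)
    then obtain S' where S': "S' \<in> snd t" "S' \<subseteq> S" "ext_val t S = fst t S'"
      using ext_attain[OF finT, of S] Spos by force
    have tS': "fst t S' \<ge> fst bi S" using S' \<open>ext_val t S \<ge> fst bi S\<close> by simp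
    from gs_accept[OF Some] obtain pre post where
      L1s: "L1 = pre @ (i,S) # post" and prei: "greedy_scan pre e i = None"
      and dis: "\<forall>j' T'. greedy_scan pre e j' = Some T' \<longrightarrow> S \<inter> T' = {}"
      by (auto simp: e_def)
    have pre_eq: "pre = filter (\<lambda>q. K1 q < K1 (i,S)) L1"
      using pre_filter[OF P1(2)[unfolded L1s]] L1s by simp
    have preS: "sorted_wrt (\<lambda>p q. K1 p < K1 q) pre" using P1(2) L1s
      by (simp add: sorted_wrt_append)
    have "(i,S') \<in> bids n b2" using assms(3) S'(1) tS' Spos by (auto simp: bids_def b2_def)
    then obtain pre' post' where L2s: "L2 = pre' @ (i,S') # post'"
      using P2(1) by (metis split_list)
    have pre'_eq: "pre' = filter (\<lambda>q. K2 q < K2 (i,S')) L2"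
      using pre_filter[OF P2(2)[unfolded L2s]] L2s by simp
    have pre'S: "sorted_wrt (\<lambda>p q. K2 p < K2 q) pre'" using P2(2) L2s
      by (simp add: sorted_wrt_append)
    show ?thesis
    proof (cases "greedy_scan pre' e i")
      case (Some T)
      have "greedy_scan L2 e i = Some T" unfolding L2s gs_app using gs_mono[of "greedy_scan pre' e" i T] Some by simp
      then have al2: "greedy_alloc rk n b2 i = T" using A2 by simp
      have "(i,T) \<in> set pre'" using gs_src[OF Some] by (simp add: e_def)
      then have "K2 (i,T) < K2 (i,S')" using pre'_eq by simp
      then have "fst t T \<ge> fst t S'" by (auto simp: K2_def bid_key_def b2_def less_prod_def)
      moreover have "(i,T) \<in> bids n b2" using \<open>(i,T) \<in> set pre'\<close> L2s P2(1) by auto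
      then have "T \<in> snd t" by (simp add: bids_def b2_def)
      ultimately show ?thesis using ext_ge[OF finT, of T T] S'(3) al1 al2
        by (simp add: b1_def b2_def)
    next
      case None
      define F where "F = filter (\<lambda>q. fst q \<noteq> i) pre"
      define F' where "F' = filter (\<lambda>q. fst q \<noteq> i) pre'"
      have KK: "\<And>q. fst q \<noteq> i \<Longrightarrow> K1 q = K2 q"
        by (auto simp: K1_def K2_def bid_key_def b1_def b2_def)
      have BB: "\<And>q. fst q \<noteq> i \<Longrightarrow> q \<in> bids n b1 \<longleftrightarrow> q \<in> bids n b2"
        by (auto simp: bids_def b1_def b2_def)
      have FS: "sorted_wrt (\<lambda>p q. K1 p < K1 q) F" unfolding F_def
        using preS by (simp add: sorted_wrt_filter)
      have F'S: "sorted_wrt (\<lambda>p q. K1 p < K1 q) F'"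
      proof (rule sorted_wrt_mono_rel[of _ "\<lambda>p q. K2 p < K2 q"])
        show "sorted_wrt (\<lambda>p q. K2 p < K2 q) F'" unfolding F'_def using pre'S
          by (simp add: sorted_wrt_filter)
        fix x y assume "x \<in> set F'" "y \<in> set F'" "K2 x < K2 y"
        then show "K1 x < K1 y" unfolding F'_def using KK by simp
      qed
      have imp: "\<And>q. fst q \<noteq> i \<Longrightarrow> K1 q < K2 (i,S') \<Longrightarrow> K1 q < K1 (i,S)"
      proof -
        fix q :: "nat \<times> 'g set" assume q: "fst q \<noteq> i" "K1 q < K2 (i,S')"
        obtain j Q where qq: "q = (j,Q)" by (cases q)
        have "K1 q = (- fst (b1 j) Q, j, rk Q)" using qq by (simp add: K1_def bid_key_def)
        moreover have "K2 (i,S') = (- fst t S', i, rk S')" by (simp add: K2_def bid_key_def b2_def)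
        moreover have "K1 (i,S) = (- fst bi S, i, rk S)" by (simp add: K1_def bid_key_def b1_def)
        ultimately show "K1 q < K1 (i,S)" using q qq tS' key_less by auto
      qed
      have "F' = filter (\<lambda>q. K1 q < K2 (i,S')) F"
      proof (rule sorted_unique[OF F'S])
        show "sorted_wrt (\<lambda>p q. K1 p < K1 q) (filter (\<lambda>q. K1 q < K2 (i,S')) F)"
          using FS by (simp add: sorted_wrt_filter)
        show "set F' = set (filter (\<lambda>q. K1 q < K2 (i,S')) F)"
        proof (rule set_eqI)
          fix q :: "nat \<times> 'g set"
          have e2: "q \<in> set F' \<longleftrightarrow> q \<in> bids n b2 \<and> K2 q < K2 (i,S') \<and> fst q \<noteq> i"
            unfolding F'_def pre'_eq set_filter P2(1) by blast
          have e1: "q \<in> set (filter (\<lambda>q. K1 q < K2 (i,S')) F) \<longleftrightarrow>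
              q \<in> bids n b1 \<and> K1 q < K1 (i,S) \<and> fst q \<noteq> i \<and> K1 q < K2 (i,S')"
            unfolding F_def pre_eq set_filter P1(1) by blast
          show "q \<in> set F' \<longleftrightarrow> q \<in> set (filter (\<lambda>q. K1 q < K2 (i,S')) F)"
          proof (cases "fst q = i")
            case True then show ?thesis using e1 e2 by blast
          next
            case False
            then show ?thesis using e1 e2 BB[OF False] KK[OF False] imp[OF False] by metis
          qed
        qed
      qed
      then have F'eq: "F' = takeWhile (\<lambda>q. K1 q < K2 (i,S')) F"
        using filter_takeWhile[OF FS] by simp
      have g': "greedy_scan pre' e = greedy_scan F' e" unfolding F'_def by (rule gs_filter[OF None])
      have g: "greedy_scan pre e = greedy_scan F e" unfolding F_def by (rule gs_filter[OF prei])
      have ok: "\<forall>j T. greedy_scan pre' e j = Some T \<longrightarrow> S' \<inter> T = {}"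
      proof (intro allI impI)
        fix j T assume h: "greedy_scan pre' e j = Some T"
        define P where "P = (\<lambda>q. K1 q < K2 (i,S'))"
        have h2: "greedy_scan (takeWhile P F) e j = Some T" using h unfolding g' F'eq P_def .
        have "greedy_scan F e j = greedy_scan (takeWhile P F @ dropWhile P F) e j" by simp
        also have "\<dots> = Some T" unfolding gs_app by (rule gs_mono[of "greedy_scan (takeWhile P F) e" j T, OF h2])
        finally have "greedy_scan F e j = Some T" .
        then have "greedy_scan pre e j = Some T" using g by simp
        then show "S' \<inter> T = {}" using dis S'(2) by blast
      qed
      have "greedy_scan L2 e i = Some S'"
        unfolding L2s gs_app using None ok by (simp add: gs_mono)
      then have al2: "greedy_alloc rk n b2 i = S'" using A2 by simp
      show ?thesis using ext_ge[OF finT S'(1), of S'] S'(3) al1 al2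
        by (simp add: b1_def b2_def)
    qed
  qed
qed

end
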